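(* For a nonempty finite subset $E\subseteq\mathbb{N}$ the following are equivalent: (1) $\mathcal{F}_E=\mathcal{F}_\infty$; (2) $A_E=\{2\}$. Moreover, if $|E|=2$, then (1) and (2) are equivalent to (3): $E=\{2^n,2^{n+1}\}$ for some integer $n\ge0$.
   Context: $\mathbb{N}=\{1,2,\dots\}$, $\mathbb{N}_0=\{0\}\cup\mathbb{N}$, $\Pi$ the set of primes. The Kirch topology $\tau_K$ on $\mathbb{N}$ is generated by the base of all $a+b\mathbb{N}_0=\{a+bn:n\in\mathbb{N}_0\}$ with $a,b\in\mathbb{N}$ coprime and $b$ square-free. Closures $\overline{U}$ are in $\tau_K$; $\tau_x=\{U\in\tau_K:x\in U\}$. For finite $E\subseteq\mathbb{N}$, $\mathcal{F}_E=\{B\subseteq\mathbb{N}:\exists (U_x)_{x\in E}\in\prod_{x\in E}\tau_x\ (\bigcap_{x\in E}\overline{U_x}\subseteq B)\}$, and $\mathcal{F}_\infty=\{B\subseteq\mathbb{N}:\exists n\in\mathbb{N}\ \exists U_1,\dots,U_n\in\tau_K\setminus\{\emptyset\}\ (\overline{U_1}\cap\dots\cap\overline{U_n}\subseteq B)\}$. For nonempty finite $E$, $A_E=\{p\in\Pi:\exists k\in\mathbb{N}\ (E\subseteq p\mathbb{Z}\cup(k+p\mathbb{Z}))\}$. *)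

theory Defs
  imports "HOL-Analysis.Analysis" "HOL-Computational_Algebra.Squarefree" "HOL-Number_Theory.Number_Theory"
begin

text \<open>Natural numbers N = {1,2,...} are represented as positive elements of type nat.
  Base of the Kirch topology: arithmetic progressions a + b N_0 with a, b >= 1,
  gcd(a,b) = 1 and b squarefree.\<close>
definition kirch_base :: "nat set set" where
  "kirch_base = {{a + b * n | n. True} | a b. a > 0 \<and> b > 0 \<and> coprime a b \<and> squarefree b}"

definition kirch :: "nat topology" where
  "kirch = topology_generated_by kirch_base"

definition tau :: "nat \<Rightarrow> nat set set" where
  "tau x = {U. openin kirch U \<and> x \<in> U}"

definition F_E :: "nat set \<Rightarrow> nat set set" where
  "F_E E = {B. B \<subseteq> {0<..} \<and>
     (\<exists>U :: nat \<Rightarrow> nat set. (\<forall>x\<in>E. U x \<in> tau x) \<and> (\<Inter>x\<in>E. kirch closure_of (U x)) \<subseteq> B)}"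

definition F_inf :: "nat set set" where
  "F_inf = {B. B \<subseteq> {0<..} \<and>
     (\<exists>n::nat. n \<ge> 1 \<and> (\<exists>U :: nat \<Rightarrow> nat set.
        (\<forall>i\<in>{1..n}. openin kirch (U i) \<and> U i \<noteq> {}) \<and>
        (\<Inter>i\<in>{1..n}. kirch closure_of (U i)) \<subseteq> B))}"

definition A_E :: "nat set \<Rightarrow> nat set" where
  "A_E E = {p. prime p \<and> (\<exists>k::nat. k > 0 \<and>
     (\<forall>x\<in>E. (int p dvd int x) \<or> [int x = int k] (mod int p)))}"

end

theory Submission
  imports Defs
begin



definition AP :: "nat \<Rightarrow> nat \<Rightarrow> nat set" where
  "AP a b = {a + b * n | n. True}"

lemma mem_AP: "z \<in> AP a b \<longleftrightarrow> a \<le> z \<and> [z = a] (mod b)"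
proof
  assume "z \<in> AP a b"
  then obtain n where "z = a + b * n" by (auto simp: AP_def)
  then show "a \<le> z \<and> [z = a] (mod b)" by (simp add: cong_def)
next
  assume h: "a \<le> z \<and> [z = a] (mod b)"
  then have "b dvd z - a" using cong_altdef_nat by blast
  then obtain n where "z - a = b * n" by blast
  then have "z = a + b * n" using h by linarith
  then show "z \<in> AP a b" by (auto simp: AP_def)
qed

lemma kirch_base_AP: "kirch_base = {AP a b | a b. a > 0 \<and> b > 0 \<and> coprime a b \<and> squarefree b}"
  unfolding kirch_base_def AP_def by simp

lemma topspace_kirch: "topspace kirch = {0<..}"
proof -
  have "\<Union>kirch_base = {0<..}"
  proof
    show "\<Union>kirch_base \<subseteq> {0<..}" by (auto simp: kirch_base_def)
    show "{0<..} \<subseteq> \<Union>kirch_base"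
    proof
      fix z :: nat assume "z \<in> {0<..}"
      then have "0 < z" "coprime z (1::nat)" "squarefree (1::nat)" by auto
      then have "AP z 1 \<in> kirch_base" unfolding kirch_base_AP by blast
      moreover have "z \<in> AP z 1" by (simp add: mem_AP)
      ultimately show "z \<in> \<Union>kirch_base" by blast
    qed
  qed
  then show ?thesis by (simp add: kirch_def)
qed

lemma basic_open: "a > 0 \<Longrightarrow> b > 0 \<Longrightarrow> coprime a b \<Longrightarrow> squarefree b \<Longrightarrow> openin kirch (AP a b)"
  unfolding kirch_def openin_topology_generated_by_iff
  by (rule generate_topology_on.Basis) (auto simp: kirch_base_AP)

lemma squarefree_lcm_nat:
  fixes a b :: nat
  assumes "squarefree a" "squarefree b"
  shows "squarefree (lcm a b)"
proof -
  have nz: "a \<noteq> 0" "b \<noteq> 0" using assms by (metis not_squarefree_0)+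
  then have "lcm a b \<noteq> 0" by simp
  then show ?thesis
    using assms nz by (simp add: squarefree_factorial_semiring'' multiplicity_lcm)
qed

lemma AP_sub:
  assumes "y \<in> AP a b" "b dvd d" shows "AP y d \<subseteq> AP a b"
proof
  fix z assume "z \<in> AP y d"
  then have "y \<le> z" "[z = y] (mod d)" by (auto simp: mem_AP)
  then have "[z = y] (mod b)" using assms(2) cong_dvd_modulus_nat by blast
  moreover have "a \<le> y" "[y = a] (mod b)" using assms(1) by (auto simp: mem_AP)
  ultimately show "z \<in> AP a b" using \<open>y \<le> z\<close> by (auto simp: mem_AP intro: cong_trans)
qed

lemma open_nbhd:
  assumes "openin kirch V" "y \<in> V"
  shows "\<exists>b>0. coprime y b \<and> squarefree b \<and> AP y b \<subseteq> V"
proof -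
  have "generate_topology_on kirch_base V" using assms(1) by (simp add: kirch_def openin_topology_generated_by_iff)
  then show ?thesis using assms(2)
  proof (induction arbitrary: y)
    case Empty
    then show ?case by simp
  next
    case (Int a b)
    then obtain b1 b2 where "b1 > 0" "coprime y b1" "squarefree b1" "AP y b1 \<subseteq> a"
       "b2 > 0" "coprime y b2" "squarefree b2" "AP y b2 \<subseteq> b" by blast
    moreover have "AP y (lcm b1 b2) \<subseteq> AP y b1" "AP y (lcm b1 b2) \<subseteq> AP y b2"
      by (rule AP_sub; simp add: mem_AP)+
    moreover have "coprime y (lcm b1 b2)"
    proof -
      have "lcm b1 b2 dvd b1 * b2" by simp
      moreover have "coprime y (b1 * b2)" using calculation \<open>coprime y b1\<close> \<open>coprime y b2\<close> by simp
      ultimately show ?thesis using coprime_imp_coprime by (metis dvd_trans)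
    qed
    ultimately show ?case
      by (intro exI[of _ "lcm b1 b2"]) (auto simp: squarefree_lcm_nat lcm_pos_nat)
  next
    case (UN K)
    then obtain k where "k \<in> K" "y \<in> k" by blast
    with UN obtain b where "b>0" "coprime y b" "squarefree b" "AP y b \<subseteq> k" by blast
    then show ?case using \<open>k \<in> K\<close> by blast
  next
    case (Basis s)
    then obtain a b where s: "s = AP a b" "a > 0" "b > 0" "coprime a b" "squarefree b"
      by (auto simp: kirch_base_AP)
    then have "[y = a] (mod b)" using Basis by (simp add: mem_AP)
    then have "coprime y b" using s by (metis cong_imp_coprime cong_sym)
    moreover have "AP y b \<subseteq> s" using AP_sub[of y a b b] s Basis.prems by simp
    ultimately show ?case using s by blast
  qed
qed


lemma sq_split: fixes g p :: nat assumes "squarefree g" "prime p" "p dvd g"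
  shows "coprime p (g div p)"
proof (rule ccontr)
  assume "\<not> coprime p (g div p)"
  then have "p dvd g div p" using assms(2) prime_imp_coprime by blast
  then have "p * p dvd p * (g div p)" by (rule mult_dvd_mono[OF dvd_refl])
  then have "p * p dvd g" using assms(3) by simp
  then have "p ^ 2 dvd g" by (simp add: power2_eq_square)
  then have "p dvd 1" using assms(1) squarefreeD by blast
  then show False using assms(2) by simp
qed

lemma sqf_cong:
  fixes g y a :: nat
  assumes "squarefree g" "\<And>p. prime p \<Longrightarrow> p dvd g \<Longrightarrow> [y = a] (mod p)"
  shows "[y = a] (mod g)"
  using assms
proof (induction g rule: less_induct)
  case (less g)
  show ?case
  proof (cases "g = 1")
    case True then show ?thesis by simp
  next
    case False
    then obtain p where p: "prime p" "p dvd g" using prime_factor_nat by blast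
    have g0: "g \<noteq> 0" using less.prems(1) by (metis not_squarefree_0)
    define h where "h = g div p"
    have gh: "g = p * h" using p h_def by simp
    have "h > 0" using gh g0 by (cases h) auto
    then have "1 * h < p * h" using prime_gt_1_nat[OF p(1)] by (intro mult_strict_right_mono) auto
    then have "h < g" using gh by simp
    moreover have hg: "h dvd g" using gh by simp
    moreover have "squarefree h" using less.prems(1) squarefree_mono[OF hg] by blast
    moreover have "\<And>q. prime q \<Longrightarrow> q dvd h \<Longrightarrow> [y = a] (mod q)"
      using less.prems(2) hg dvd_trans by blast
    ultimately have "[y = a] (mod h)" using less.IH by blast
    moreover have "[y = a] (mod p)" using less.prems(2) p by blast
    moreover have "coprime p h" unfolding h_def by (rule sq_split[OF less.prems(1) p])
    ultimately have "[y = a] (mod p * h)" using coprime_cong_mult_nat by blast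
    then show ?thesis using gh by simp
  qed
qed
lemma gen_crt:
  fixes a b y d :: nat
  assumes b: "b > 0" and d: "d > 0" and c: "[y = a] (mod gcd b d)"
  shows "\<exists>z. z \<in> AP a b \<and> z \<in> AP y d"
proof -
  have "[int y = int a] (mod int (gcd b d))" using c by (simp add: cong_int_iff)
  then have "int (gcd b d) dvd int y - int a" by (simp add: cong_iff_dvd_diff)
  then obtain k where k: "int y - int a = int (gcd b d) * k" by blast
  obtain u v where uv: "u * int b + v * int d = gcd (int b) (int d)" using bezout_int by blast
  have g: "gcd (int b) (int d) = int (gcd b d)" by simp
  define z0 where "z0 = int a + int b * u * k"
  have z0y: "z0 = int y - int d * (v * k)"
    using k uv g unfolding z0_def by (simp add: algebra_simps) (metis add_diff_cancel_right' distrib_right mult.commute)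
  define t where "t = \<bar>z0\<bar> + int a + int y"
  have t0: "t \<ge> 0" unfolding t_def by simp
  have "int b * int d > 0" using b d by simp
  then have "int b * int d \<ge> 1" by linarith
  then have bdt: "int b * int d * t \<ge> t" using t0 by (metis mult_le_cancel_right1 mult.commute order_refl mult_right_mono mult_1_left)
  define z1 where "z1 = z0 + int b * int d * t"
  have z1a: "z1 \<ge> int a" "z1 \<ge> int y" using bdt unfolding z1_def t_def by linarith+
  define z where "z = nat z1"
  have zz: "int z = z1" using z1a unfolding z_def by simp
  have "[z1 = int a] (mod int b)"
    unfolding z1_def z0_def by (simp add: cong_iff_dvd_diff)
  then have "[int z = int a] (mod int b)" using zz by simp
  then have "[z = a] (mod b)" by (simp add: cong_int_iff)
  moreover have "[z1 = int y] (mod int d)"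
    unfolding z1_def z0y by (simp add: cong_iff_dvd_diff)
  then have "[int z = int y] (mod int d)" using zz by simp
  then have "[z = y] (mod d)" by (simp add: cong_int_iff)
  moreover have "a \<le> z" "y \<le> z" using z1a zz by linarith+
  ultimately show ?thesis by (auto simp: mem_AP)
qed

lemma closure_ub:
  assumes "y \<in> kirch closure_of S" "prime p" "\<not> p dvd y" "\<forall>z\<in>S. [z = a] (mod p)"
  shows "[y = a] (mod p)"
proof -
  have y0: "y > 0" using assms(1) by (simp add: in_closure_of topspace_kirch)
  have "coprime y p" using prime_imp_coprime assms(2,3) coprime_commute by blast
  then have op: "openin kirch (AP y p)"
    using basic_open y0 prime_gt_0_nat[OF assms(2)] squarefree_prime[OF assms(2)] by blast
  have "y \<in> AP y p" by (simp add: mem_AP)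
  then obtain z where "z \<in> S" "z \<in> AP y p" using assms(1) op unfolding in_closure_of by blast
  then have "[z = y] (mod p)" "[z = a] (mod p)" using assms(4) by (auto simp: mem_AP)
  then show ?thesis by (metis cong_sym cong_trans)
qed

lemma closure_lb:
  assumes "a > 0" "b > 0" "coprime a b" "squarefree b" "y > 0"
    "\<And>p. prime p \<Longrightarrow> p dvd b \<Longrightarrow> \<not> p dvd y \<Longrightarrow> [y = a] (mod p)"
  shows "y \<in> kirch closure_of (AP a b)"
  unfolding in_closure_of topspace_kirch
proof (intro conjI allI impI)
  show "y \<in> {0<..}" using assms(5) by simp
  fix T assume T: "y \<in> T \<and> openin kirch T"
  then obtain d where d: "d > 0" "coprime y d" "squarefree d" "AP y d \<subseteq> T"
    using open_nbhd by blast
  have "squarefree (gcd b d)" using squarefree_mono[OF gcd_dvd1 assms(4)] .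
  moreover have "[y = a] (mod p)" if p: "prime p" "p dvd gcd b d" for p
  proof -
    have "p dvd b" "p dvd d" using p by auto
    moreover have "\<not> p dvd y"
    proof
      assume "p dvd y"
      then have "p dvd gcd y d" using \<open>p dvd d\<close> by simp
      then show False using d(2) p(1) by (simp add: not_prime_1)
    qed
    ultimately show ?thesis using assms(6) p(1) by blast
  qed
  ultimately have "[y = a] (mod gcd b d)" using sqf_cong by blast
  then obtain z where "z \<in> AP a b" "z \<in> AP y d" using gen_crt assms(2) d(1) by blast
  then show "\<exists>z. z \<in> AP a b \<and> z \<in> T" using d(4) by blast
qed



lemma A_E_nat: "p \<in> A_E E \<longleftrightarrow> prime p \<and> (\<exists>k>0. \<forall>x\<in>E. p dvd x \<or> [x = k] (mod p))"
  unfolding A_E_def by (simp add: cong_int_iff)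

lemma two_in_A_E: "2 \<in> A_E E"
proof -
  have "\<forall>x\<in>E. 2 dvd x \<or> [x = 1] (mod 2)"
    by (auto simp: cong_def)
  then show ?thesis unfolding A_E_nat by (intro conjI exI[of _ 1]) auto
qed

lemma A_E_pair:
  assumes "x > 0" "y > 0"
  shows "p \<in> A_E {x, y} \<longleftrightarrow> prime p \<and> (p dvd x \<or> p dvd y \<or> [x = y] (mod p))"
proof
  assume "p \<in> A_E {x, y}"
  then obtain k where "prime p" "p dvd x \<or> [x = k] (mod p)" "p dvd y \<or> [y = k] (mod p)"
    unfolding A_E_nat by blast
  then show "prime p \<and> (p dvd x \<or> p dvd y \<or> [x = y] (mod p))"
    by (meson cong_sym cong_trans)
next
  assume h: "prime p \<and> (p dvd x \<or> p dvd y \<or> [x = y] (mod p))"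
  show "p \<in> A_E {x, y}"
  proof (cases "p dvd x")
    case True
    then show ?thesis using h assms unfolding A_E_nat by (intro conjI exI[of _ y]) auto
  next
    case False
    then have "p dvd y \<or> [y = x] (mod p)" using h cong_sym by blast
    then show ?thesis using h assms unfolding A_E_nat by (intro conjI exI[of _ x]) auto
  qed
qed

lemma pow2_of:
  fixes x :: nat
  assumes "x > 0" "\<And>p. prime p \<Longrightarrow> p dvd x \<Longrightarrow> p = 2"
  shows "\<exists>a. x = 2 ^ a"
  using assms
proof (induction x rule: less_induct)
  case (less x)
  show ?case
  proof (cases "x = 1")
    case True then show ?thesis by (intro exI[of _ 0]) simp
  next
    case False
    then obtain p where p: "prime p" "p dvd x" using prime_factor_nat by blast
    then have "p = 2" using less.prems by blast
    then have x2: "x = 2 * (x div 2)" using p by simp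
    have "x div 2 < x" "x div 2 > 0" using less.prems(1) x2 by linarith+
    moreover have "\<And>q. prime q \<Longrightarrow> q dvd x div 2 \<Longrightarrow> q = 2"
    proof -
      fix q assume "prime q" "q dvd x div 2"
      moreover have "x div 2 dvd x" using x2 dvd_triv_right[of "x div 2" 2] by argo
      ultimately show "q = 2" using less.prems(2) dvd_trans by blast
    qed
    ultimately obtain a where "x div 2 = 2 ^ a" using less.IH by blast
    then have "x = 2 ^ Suc a" using x2 by simp
    then show ?thesis by blast
  qed
qed

lemma pow2_step:
  fixes a b :: nat
  assumes "a < b" "\<And>q. prime q \<Longrightarrow> q \<noteq> 2 \<Longrightarrow> \<not> [(2::nat) ^ a = 2 ^ b] (mod q)"
  shows "b = a + 1"
proof (rule ccontr)
  assume ne: "b \<noteq> a + 1"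
  define c where "c = b - a"
  have c2: "c \<ge> 2" using assms(1) ne unfolding c_def by linarith
  define w where "w = 2 ^ c - (1::nat)"
  have "(2::nat) ^ c \<ge> 2 ^ 2" using c2 by (intro power_increasing) auto
  then have o3: "w \<ge> 3" unfolding w_def by simp
  have "odd w" unfolding w_def using c2 by simp
  obtain q where q: "prime q" "q dvd w" using prime_factor_nat[of w] o3 by auto
  have "q \<noteq> 2" using q \<open>odd w\<close> by auto
  have bb: "(2::nat) ^ b = 2 ^ a * 2 ^ c" unfolding c_def using assms(1) by (simp add: power_add[symmetric])
  have "2 ^ b - 2 ^ a = 2 ^ a * (w::nat)" unfolding w_def bb diff_mult_distrib2 by simp
  then have "q dvd 2 ^ b - 2 ^ a" using q by simp
  moreover have "(2::nat) ^ a \<le> 2 ^ b" using assms(1) by simp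
  ultimately have "[2 ^ b = 2 ^ a] (mod q)" by (simp add: cong_altdef_nat)
  then show False using assms(2) q \<open>q \<noteq> 2\<close> cong_sym by blast
qed

lemma pair_char:
  fixes x y :: nat
  assumes "x > 0" "y > 0" "x \<noteq> y"
  shows "A_E {x, y} = {2} \<longleftrightarrow> (\<exists>n. {x, y} = {2 ^ n, 2 ^ (n + 1)})"
proof
  assume A: "A_E {x, y} = {2}"
  have np: "\<not> (p dvd x \<or> p dvd y \<or> [x = y] (mod p))" if "prime p" "p \<noteq> 2" for p
    using A A_E_pair[OF assms(1,2), of p] that by auto
  obtain a where a: "x = 2 ^ a" using pow2_of[OF assms(1)] np by blast
  obtain b where b: "y = 2 ^ b" using pow2_of[OF assms(2)] np by blast
  have "a \<noteq> b" using a b assms(3) by auto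
  then consider "a < b" | "b < a" by linarith
  then show "\<exists>n. {x, y} = {2 ^ n, 2 ^ (n + 1)}"
  proof cases
    case 1
    then have "b = a + 1" using pow2_step np a b by blast
    then show ?thesis using a b by blast
  next
    case 2
    then have "a = b + 1" using pow2_step np a b cong_sym by blast
    then show ?thesis using a b by (intro exI[of _ b]) auto
  qed
next
  assume "\<exists>n. {x, y} = {2 ^ n, 2 ^ (n + 1)}"
  then obtain n where n: "{x, y} = {2 ^ n, 2 ^ (n + 1)}" by blast
  have "p = 2" if "p \<in> A_E {x, y}" for p
  proof (rule ccontr)
    assume p2: "p \<noteq> 2"
    have p: "prime p" using that unfolding A_E_nat by blast
    have nd: "\<not> p dvd 2 ^ m" for m
    proof
      assume "p dvd 2 ^ m"
      then have "p dvd 2" using p prime_dvd_power by blast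
      then have "p \<le> 2" by (simp add: dvd_imp_le)
      then show False using p p2 prime_ge_2_nat[OF p] by linarith
    qed
    have "p dvd x \<or> p dvd y \<or> [x = y] (mod p)" using that A_E_pair[OF assms(1,2)] by blast
    then have "[(2::nat) ^ n = 2 ^ (n + 1)] (mod p)" using n nd
      by (metis cong_sym doubleton_eq_iff)
    then have "[(2::nat) ^ (n + 1) = 2 ^ n] (mod p)" by (rule cong_sym)
    moreover have "(2::nat) ^ n \<le> 2 ^ (n + 1)" by simp
    ultimately have "p dvd 2 ^ (n + 1) - 2 ^ n" using cong_altdef_nat by blast
    moreover have "(2::nat) ^ (n + 1) - 2 ^ n = 2 ^ n" by simp
    ultimately show False using nd by simp
  qed
  then show "A_E {x, y} = {2}" using two_in_A_E by blast
qed


lemma FE_sub_Finf: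
  assumes "finite E" "E \<noteq> {}"
  shows "F_E E \<subseteq> F_inf"
proof
  fix B assume "B \<in> F_E E"
  then have "B \<subseteq> {0<..} \<and> (\<exists>U :: nat \<Rightarrow> nat set. (\<forall>x\<in>E. U x \<in> tau x) \<and> (\<Inter>x\<in>E. kirch closure_of (U x)) \<subseteq> B)"
    unfolding F_E_def by (rule CollectD)
  then obtain U :: "nat \<Rightarrow> nat set" where B: "B \<subseteq> {0<..}" "\<forall>x\<in>E. U x \<in> tau x" "(\<Inter>x\<in>E. kirch closure_of (U x)) \<subseteq> B"
    by blast
  obtain h where h: "bij_betw h {1..card E} E" using ex_bij_betw_nat_finite_1[OF assms(1)] by blast
  have n1: "card E \<ge> 1" using assms by (simp add: Suc_le_eq card_gt_0_iff)
  have himg: "h ` {1..card E} = E" using h by (simp add: bij_betw_def)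
  have op: "\<forall>i\<in>{1..card E}. openin kirch (U (h i)) \<and> U (h i) \<noteq> {}"
  proof
    fix i assume "i \<in> {1..card E}"
    then have "h i \<in> E" using himg by blast
    then show "openin kirch (U (h i)) \<and> U (h i) \<noteq> {}" using B(2) by (auto simp: tau_def)
  qed
  have "(\<Inter>i\<in>{1..card E}. kirch closure_of (U (h i))) = (\<Inter>x\<in>h ` {1..card E}. kirch closure_of (U x))"
    by (simp add: image_image)
  also have "\<dots> = (\<Inter>x\<in>E. kirch closure_of (U x))" using himg by simp
  finally have sub: "(\<Inter>i\<in>{1..card E}. kirch closure_of (U (h i))) \<subseteq> B" using B(3) by simp
  have "\<exists>U'. (\<forall>i\<in>{1..card E}. openin kirch (U' i) \<and> U' i \<noteq> {}) \<and>
        (\<Inter>i\<in>{1..card E}. kirch closure_of (U' i)) \<subseteq> B"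
    using op sub by (intro exI[of _ "\<lambda>i. U (h i)"]) simp
  then have "\<exists>n::nat. n \<ge> 1 \<and> (\<exists>U'. (\<forall>i\<in>{1..n}. openin kirch (U' i) \<and> U' i \<noteq> {}) \<and>
        (\<Inter>i\<in>{1..n}. kirch closure_of (U' i)) \<subseteq> B)"
    using n1 by blast
  then show "B \<in> F_inf" unfolding F_inf_def using B(1) by (intro CollectI conjI)
qed

lemma prime_even_2: "prime (p::nat) \<Longrightarrow> \<not> odd p \<Longrightarrow> p = 2"
  using primes_dvd_imp_eq two_is_prime_nat by blast

lemma Finf_sub_FE:
  assumes "finite E" "E \<noteq> {}" "E \<subseteq> {0<..}" "A_E E = {2}"
  shows "F_inf \<subseteq> F_E E"
proof
  fix B assume "B \<in> F_inf"
  then obtain n :: nat and U :: "nat \<Rightarrow> nat set" where B: "B \<subseteq> {0<..}" "n \<ge> 1" "\<forall>i\<in>{1..n}. openin kirch (U i) \<and> U i \<noteq> {}"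
     "(\<Inter>i\<in>{1..n}. kirch closure_of (U i)) \<subseteq> B"
    unfolding F_inf_def by blast
  have "\<forall>i\<in>{1..n}. \<exists>yd. fst yd > 0 \<and> snd yd > 0 \<and> coprime (fst yd) (snd yd) \<and> squarefree (snd yd)
          \<and> AP (fst yd) (snd yd) \<subseteq> U i"
  proof
    fix i assume i: "i \<in> {1..n}"
    then obtain y where y: "y \<in> U i" using B(3) by blast
    then have "y > 0" using B(3) i openin_subset[of kirch "U i"] topspace_kirch by auto
    moreover obtain d where "d > 0" "coprime y d" "squarefree d" "AP y d \<subseteq> U i"
      using open_nbhd y B(3) i by blast
    ultimately show "\<exists>yd. fst yd > 0 \<and> snd yd > 0 \<and> coprime (fst yd) (snd yd) \<and> squarefree (snd yd)
          \<and> AP (fst yd) (snd yd) \<subseteq> U i"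
      by (intro exI[of _ "(y, d)"]) auto
  qed
  from bchoice[OF this] obtain yd where yd0: "\<forall>i\<in>{1..n}. fst (yd i) > 0 \<and> snd (yd i) > 0 \<and> coprime (fst (yd i)) (snd (yd i))
      \<and> squarefree (snd (yd i)) \<and> AP (fst (yd i)) (snd (yd i)) \<subseteq> U i"
    by blast
  have yd: "fst (yd i) > 0 \<and> snd (yd i) > 0 \<and> coprime (fst (yd i)) (snd (yd i))
      \<and> squarefree (snd (yd i)) \<and> AP (fst (yd i)) (snd (yd i)) \<subseteq> U i" if "i \<in> {1..n}" for i
    using yd0 that by blast
  define P where "P = {p. prime p \<and> odd p \<and> (\<exists>i\<in>{1..n}. p dvd snd (yd i))}"
  have finP: "finite P"
  proof -
    have "P \<subseteq> (\<Union>i\<in>{1..n}. {p. p dvd snd (yd i)})" unfolding P_def by blast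
    moreover have "finite (\<Union>i\<in>{1..n}. {p. p dvd snd (yd i)})"
      using yd by (intro finite_UN_I) (auto intro: finite_divisors_nat)
    ultimately show ?thesis by (rule finite_subset)
  qed
  define S where "S = {y. y > 0 \<and> (\<forall>p\<in>P. p dvd y)}"
  have S_sub: "S \<subseteq> B"
  proof -
    have "S \<subseteq> kirch closure_of (U i)" if i: "i \<in> {1..n}" for i
    proof
      fix y assume y: "y \<in> S"
      let ?a = "fst (yd i)" and ?b = "snd (yd i)"
      have "y \<in> kirch closure_of (AP ?a ?b)"
      proof (rule closure_lb)
        show "?a > 0" "?b > 0" "coprime ?a ?b" "squarefree ?b" using yd[OF i] by auto
        show "y > 0" using y S_def by simp
        fix p assume p: "prime p" "p dvd ?b" "\<not> p dvd y"
        then have "p \<notin> P" using y S_def by blast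
        then have "\<not> odd p" using p i unfolding P_def by blast
        then have p2: "p = 2" using p prime_even_2 by blast
        have "odd ?a"
        proof
          assume "even ?a"
          then have "is_unit (2::nat)" using yd[OF i] p p2 coprime_common_divisor[of ?a ?b 2] by blast
          then show False by simp
        qed
        moreover have "odd y" using p p2 by simp
        ultimately show "[y = ?a] (mod p)" using p2 by (simp add: cong_def odd_iff_mod_2_eq_one)
      qed
      then show "y \<in> kirch closure_of (U i)" using closure_of_mono yd[OF i] by blast
    qed
    then have "S \<subseteq> (\<Inter>i\<in>{1..n}. kirch closure_of (U i))" by blast
    then show ?thesis using B(4) by blast
  qed
  define V where "V x = (\<Inter>p\<in>{p\<in>P. \<not> p dvd x}. AP x p) \<inter> topspace kirch" for x
  have Vtau: "V x \<in> tau x" if x: "x \<in> E" for x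
  proof -
    have x0: "x > 0" using x assms(3) by auto
    have "openin kirch (V x)" unfolding V_def
    proof (rule openin_INT)
      show "finite {p \<in> P. \<not> p dvd x}" using finP by simp
      fix p assume "p \<in> {p \<in> P. \<not> p dvd x}"
      then have p: "prime p" "\<not> p dvd x" unfolding P_def by auto
      then have "coprime x p" using prime_imp_coprime coprime_commute by blast
      then show "openin kirch (AP x p)"
        using basic_open x0 prime_gt_0_nat[OF p(1)] squarefree_prime[OF p(1)] by blast
    qed
    moreover have "x \<in> V x" unfolding V_def topspace_kirch using x0 by (auto simp: mem_AP)
    ultimately show ?thesis by (simp add: tau_def)
  qed
  have sub2: "(\<Inter>x\<in>E. kirch closure_of (V x)) \<subseteq> S"
  proof
    fix y assume y: "y \<in> (\<Inter>x\<in>E. kirch closure_of (V x))"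
    obtain x0 where "x0 \<in> E" using assms(2) by blast
    then have "y \<in> kirch closure_of (V x0)" using y by blast
    then have "y \<in> topspace kirch" by (rule subsetD[OF closure_of_subset_topspace])
    then have y0: "y > 0" by (simp add: topspace_kirch)
    have "p dvd y" if p: "p \<in> P" for p
    proof (rule ccontr)
      assume nd: "\<not> p dvd y"
      have pp: "prime p" "odd p" using p unfolding P_def by auto
      then have "p \<notin> A_E E" using assms(4) by auto
      then have "\<not> (\<forall>x\<in>E. p dvd x \<or> [x = y] (mod p))" using pp y0 unfolding A_E_nat by blast
      then obtain x where x: "x \<in> E" "\<not> p dvd x" "\<not> [x = y] (mod p)" by blast
      have "\<forall>z\<in>V x. [z = x] (mod p)" using p x unfolding V_def by (auto simp: mem_AP)
      moreover have "y \<in> kirch closure_of (V x)" using y x by blast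
      ultimately have "[y = x] (mod p)" using closure_ub pp nd by blast
      then show False using x cong_sym by blast
    qed
    then show "y \<in> S" using y0 S_def by blast
  qed
  have "\<exists>U :: nat \<Rightarrow> nat set. (\<forall>x\<in>E. U x \<in> tau x) \<and> (\<Inter>x\<in>E. kirch closure_of (U x)) \<subseteq> B"
    using Vtau sub2 S_sub by (intro exI[of _ V]) blast
  then show "B \<in> F_E E" unfolding F_E_def using B(1) by (intro CollectI conjI)
qed



lemma FE_imp_A:
  assumes "finite E" "E \<noteq> {}" "E \<subseteq> {0<..}" "F_E E = F_inf"
  shows "A_E E = {2}"
proof -
  have "p = 2" if pA: "p \<in> A_E E" for p
  proof (rule ccontr)
    assume p2: "p \<noteq> 2"
    from pA obtain k where p: "prime p" and k: "k > 0" "\<forall>x\<in>E. p dvd x \<or> [x = k] (mod p)"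
      unfolding A_E_nat by blast
    have p3: "p > 2" using p p2 prime_ge_2_nat[OF p] by linarith
    have ndp1: "\<not> p dvd 1" using p3 by auto
    have ndp2: "\<not> p dvd 2" using p3 by (auto dest: dvd_imp_le)
    have cop1: "coprime 1 p" by simp
    have cop2: "coprime 2 p" using p ndp2 prime_imp_coprime coprime_commute by blast
    have pp0: "p > 0" "squarefree p" using p by (auto simp: prime_gt_0_nat squarefree_prime)
    define B where "B = {y. y > 0 \<and> p dvd y}"
    define U0 where "U0 i = (if i = 1 then AP 1 p else AP 2 p)" for i :: nat
    have o1: "openin kirch (AP 1 p)" using basic_open[of 1 p] cop1 pp0 by auto
    have o2: "openin kirch (AP 2 p)" using basic_open[of 2 p] cop2 pp0 by auto
    have m1: "1 \<in> AP 1 p" and m2: "2 \<in> AP 2 p" by (auto simp: mem_AP)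
    have "B \<in> F_inf"
    proof -
      have op: "\<forall>i\<in>{1..2::nat}. openin kirch (U0 i) \<and> U0 i \<noteq> {}"
        using o1 o2 m1 m2 unfolding U0_def by auto
      have sub: "(\<Inter>i\<in>{1..2::nat}. kirch closure_of (U0 i)) \<subseteq> B"
      proof
        fix y assume y: "y \<in> (\<Inter>i\<in>{1..2::nat}. kirch closure_of (U0 i))"
        have "(1::nat) \<in> {1..2}" "(2::nat) \<in> {1..2}" by auto
        then have "y \<in> kirch closure_of (U0 1)" "y \<in> kirch closure_of (U0 2)" using y by blast+
        then have y1: "y \<in> kirch closure_of (AP 1 p)" and y2: "y \<in> kirch closure_of (AP 2 p)"
          unfolding U0_def by simp_all
        have "y \<in> topspace kirch" using y1 by (rule subsetD[OF closure_of_subset_topspace])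
        then have y0: "y > 0" by (simp add: topspace_kirch)
        show "y \<in> B"
        proof (rule ccontr)
          assume "y \<notin> B"
          then have nd: "\<not> p dvd y" using y0 B_def by auto
          have "\<forall>z\<in>AP 1 p. [z = 1] (mod p)" by (auto simp: mem_AP)
          then have c1: "[y = 1] (mod p)" using closure_ub[OF y1 p nd] by blast
          have "\<forall>z\<in>AP 2 p. [z = 2] (mod p)" by (auto simp: mem_AP)
          then have c2: "[y = 2] (mod p)" using closure_ub[OF y2 p nd] by blast
          have "[1 = 2] (mod p)" using c1 c2 cong_sym cong_trans by blast
          then have "(1::nat) mod p = 2 mod p" by (simp add: cong_def)
          then show False using p3 by simp
        qed
      qed
      have "\<exists>U'. (\<forall>i\<in>{1..2::nat}. openin kirch (U' i) \<and> U' i \<noteq> {}) \<and>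
          (\<Inter>i\<in>{1..2::nat}. kirch closure_of (U' i)) \<subseteq> B"
        using op sub by (intro exI[of _ U0]) blast
      then have "\<exists>n::nat. n \<ge> 1 \<and> (\<exists>U'. (\<forall>i\<in>{1..n}. openin kirch (U' i) \<and> U' i \<noteq> {}) \<and>
          (\<Inter>i\<in>{1..n}. kirch closure_of (U' i)) \<subseteq> B)"
        by (intro exI[of _ 2]) simp
      moreover have "B \<subseteq> {0<..}" unfolding B_def by auto
      ultimately show ?thesis unfolding F_inf_def by (intro CollectI conjI)
    qed
    then have "B \<in> F_E E" using assms(4) by simp
    then have "B \<subseteq> {0<..} \<and> (\<exists>U :: nat \<Rightarrow> nat set. (\<forall>x\<in>E. U x \<in> tau x) \<and> (\<Inter>x\<in>E. kirch closure_of (U x)) \<subseteq> B)"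
      unfolding F_E_def by (rule CollectD)
    then obtain U :: "nat \<Rightarrow> nat set" where U: "\<forall>x\<in>E. U x \<in> tau x" "(\<Inter>x\<in>E. kirch closure_of (U x)) \<subseteq> B"
      by blast
    have "\<forall>x\<in>E. \<exists>d. d > 0 \<and> coprime x d \<and> squarefree d \<and> AP x d \<subseteq> U x"
    proof
      fix x assume "x \<in> E"
      then have "openin kirch (U x)" "x \<in> U x" using U(1) by (auto simp: tau_def)
      then show "\<exists>d. d > 0 \<and> coprime x d \<and> squarefree d \<and> AP x d \<subseteq> U x" by (rule open_nbhd)
    qed
    from bchoice[OF this] obtain dd where dd0: "\<forall>x\<in>E. dd x > 0 \<and> coprime x (dd x) \<and> squarefree (dd x) \<and> AP x (dd x) \<subseteq> U x"
      by blast
    have dd: "dd x > 0 \<and> coprime x (dd x) \<and> squarefree (dd x) \<and> AP x (dd x) \<subseteq> U x" if "x \<in> E" for x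
      using dd0 that by blast
    define f where "f x = (if p dvd dd x then dd x div p else dd x)" for x
    define m where "m = (\<Prod>x\<in>E. f x)"
    have nf: "\<not> p dvd f x" if x: "x \<in> E" for x
    proof (cases "p dvd dd x")
      case True
      then have cp: "coprime p (dd x div p)" using sq_split dd[OF x] p by blast
      show ?thesis
      proof
        assume "p dvd f x"
        then have "p dvd dd x div p" using True f_def by simp
        then have "is_unit p" using coprime_common_divisor[OF cp dvd_refl] by blast
        then show False using p by simp
      qed
    next
      case False then show ?thesis by (simp add: f_def)
    qed
    have "\<not> p dvd m" unfolding m_def using prime_dvd_prod_iff[OF assms(1) p] nf by blast
    then have cmp: "coprime m p" using prime_imp_coprime p coprime_commute by blast
    define r where "r = (if p dvd k then 1 else k)"
    have nr: "\<not> p dvd r" using ndp1 r_def by auto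
    obtain y where y: "[y = 0] (mod m)" "[y = r] (mod p)" using binary_chinese_remainder_nat[OF cmp] by blast
    have ndy: "\<not> p dvd y" using cong_dvd_iff[OF y(2)] nr by blast
    have y0: "y > 0" using ndy by (cases y) auto
    have my: "m dvd y" using y(1) by (simp add: cong_0_iff)
    have "y \<in> kirch closure_of (U x)" if x: "x \<in> E" for x
    proof -
      have x0: "x > 0" using x assms(3) by auto
      have "y \<in> kirch closure_of (AP x (dd x))"
      proof (rule closure_lb)
        show "x > 0" "dd x > 0" "coprime x (dd x)" "squarefree (dd x)" "y > 0" using dd[OF x] x0 y0 by auto
        fix q assume q: "prime q" "q dvd dd x" "\<not> q dvd y"
        show "[y = x] (mod q)"
        proof (cases "q = p")
          case True
          have "\<not> p dvd x"
          proof
            assume "p dvd x"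
            then have "is_unit p" using True q dd[OF x] coprime_common_divisor[of x "dd x" p] by blast
            then show False using p by simp
          qed
          then have xk: "[x = k] (mod p)" using k x by blast
          then have "\<not> p dvd k" using cong_dvd_iff[OF xk] \<open>\<not> p dvd x\<close> by blast
          then have "r = k" by (simp add: r_def)
          then have "[y = k] (mod p)" using y(2) by simp
          then show ?thesis using xk True cong_sym cong_trans by blast
        next
          case False
          have "q dvd f x"
          proof (cases "p dvd dd x")
            case True
            then have "dd x = p * (dd x div p)" by simp
            then have "q dvd p * (dd x div p)" using q by simp
            then have "q dvd p \<or> q dvd dd x div p" using q prime_dvd_mult_iff by blast
            moreover have "\<not> q dvd p" using q p False primes_dvd_imp_eq by blast
            ultimately show ?thesis using True f_def by simp
          next
            case False then show ?thesis using q f_def by simp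
          qed
          moreover have "f x dvd m" unfolding m_def using assms(1) x by (rule dvd_prodI)
          ultimately have "q dvd y" using my dvd_trans by blast
          then show ?thesis using q by blast
        qed
      qed
      then show ?thesis using closure_of_mono dd[OF x] by blast
    qed
    then have "y \<in> (\<Inter>x\<in>E. kirch closure_of (U x))" by blast
    then have "y \<in> B" using U(2) by blast
    then show False using ndy B_def by simp
  qed
  then show ?thesis using two_in_A_E by blast
qed


theorem lemma3p8:
  fixes E :: "nat set"
  assumes "finite E" and "E \<noteq> {}" and "E \<subseteq> {0<..}"
  shows "(F_E E = F_inf \<longleftrightarrow> A_E E = {2})
     \<and> (card E = 2 \<longrightarrow>
          ((F_E E = F_inf \<longleftrightarrow> (\<exists>n::nat. E = {2 ^ n, 2 ^ (n + 1)}))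
           \<and> (A_E E = {2} \<longleftrightarrow> (\<exists>n::nat. E = {2 ^ n, 2 ^ (n + 1)}))))"
proof -
  have main: "F_E E = F_inf \<longleftrightarrow> A_E E = {2}"
  proof
    assume "F_E E = F_inf"
    then show "A_E E = {2}" using FE_imp_A assms by blast
  next
    assume "A_E E = {2}"
    then have "F_E E \<subseteq> F_inf" "F_inf \<subseteq> F_E E" using FE_sub_Finf Finf_sub_FE assms by blast+
    then show "F_E E = F_inf" by (rule equalityI)
  qed
  moreover have "card E = 2 \<longrightarrow> (A_E E = {2} \<longleftrightarrow> (\<exists>n::nat. E = {2 ^ n, 2 ^ (n + 1)}))"
  proof
    assume "card E = 2"
    then obtain x y where E: "E = {x, y}" "x \<noteq> y" by (auto simp: card_2_iff)
    then have "x > 0" "y > 0" using assms(3) by auto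
    then show "A_E E = {2} \<longleftrightarrow> (\<exists>n::nat. E = {2 ^ n, 2 ^ (n + 1)})" using pair_char E by simp
  qed
  ultimately show ?thesis by blast
qed

end
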